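(* Let $G$ be a graph on $n$ vertices such that $G\neq K_n$ and $G\ne \overline{K_n}$ (i.e. $G$ is neither complete nor edgeless). Then \[ \operatorname{rank}(A_G+I)\cdot\operatorname{rank}(A_{\overline G}+I)\ \ge\ 2n. \] Moreover, equality holds if and only if $G$ or $\overline{G}$ is (isomorphic to) $K_{a,n-a}$ for some integer $a$ with $1\le a\le\lfloor n/2\rfloor$.
   Context: All graphs are simple (undirected, no loops or multiple edges). $A_G$ denotes the $n\times n$ adjacency matrix of $G$, $\overline{G}$ the complement of $G$, $I=I_n$ the $n\times n$ identity matrix, and $\operatorname{rank}$ is the rank over $\mathbb{R}$. $K_n$ is the complete graph on $n$ vertices, $\overline{K_n}$ the edgeless graph on $n$ vertices, and $K_{a,b}$ the complete bipartite graph with part sizes $a$ and $b$. *)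

theory Defs
  imports "HOL-Analysis.Analysis"
begin

text \<open>A simple graph on the finite vertex type 'n (so n = CARD('n)) is given by a
symmetric irreflexive adjacency relation.\<close>

definition simple_graph :: "('n \<Rightarrow> 'n \<Rightarrow> bool) \<Rightarrow> bool" where
  "simple_graph E \<longleftrightarrow> (\<forall>i j. E i j \<longleftrightarrow> E j i) \<and> (\<forall>i. \<not> E i i)"

definition adj_matrix :: "('n::finite \<Rightarrow> 'n \<Rightarrow> bool) \<Rightarrow> real^'n^'n" where
  "adj_matrix E = (\<chi> i j. if E i j then 1 else 0)"

definition complement_graph :: "('n \<Rightarrow> 'n \<Rightarrow> bool) \<Rightarrow> 'n \<Rightarrow> 'n \<Rightarrow> bool" where
  "complement_graph E = (\<lambda>i j. i \<noteq> j \<and> \<not> E i j)"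

definition is_complete :: "('n \<Rightarrow> 'n \<Rightarrow> bool) \<Rightarrow> bool" where
  "is_complete E \<longleftrightarrow> (\<forall>i j. i \<noteq> j \<longrightarrow> E i j)"

definition is_edgeless :: "('n \<Rightarrow> 'n \<Rightarrow> bool) \<Rightarrow> bool" where
  "is_edgeless E \<longleftrightarrow> (\<forall>i j. \<not> E i j)"

text \<open>The graph E (on the vertex type 'n) is isomorphic to K_{a, n-a}: there is a set S
of a vertices such that the edges are exactly the pairs with one end in S and the other
outside S.\<close>

definition iso_complete_bipartite :: "('n::finite \<Rightarrow> 'n \<Rightarrow> bool) \<Rightarrow> nat \<Rightarrow> bool" where
  "iso_complete_bipartite E a \<longleftrightarrow>
     (\<exists>S::'n set. card S = a \<and> (\<forall>i j. E i j \<longleftrightarrow> ((i \<in> S) \<noteq> (j \<in> S))))"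

end

theory Submission
  imports Defs
begin


definition ssum :: "real^'n::finite \<Rightarrow> real" where
  "ssum z = (\<Sum>i\<in>UNIV. z$i)"

definition Mv :: "real^'n::finite \<Rightarrow> real^'n" where
  "Mv z = (\<chi> i. z$i + ssum z)"

definition Nv :: "real^'n::finite \<Rightarrow> real^'n" where
  "Nv z = (\<chi> i. (real CARD('n) + 1) * z$i - ssum z)"

definition Bf :: "real^'n::finite \<Rightarrow> real^'n \<Rightarrow> real" where
  "Bf a b = (real CARD('n) + 1) * (a \<bullet> b) - ssum a * ssum b"

lemma ssum_add: "ssum (a + b) = ssum a + ssum b"
  by (simp add: ssum_def sum.distrib)
lemma ssum_diff: "ssum (a - b) = ssum a - ssum b"
  by (simp add: ssum_def sum_subtractf)
lemma ssum_scale: "ssum (c *\<^sub>R a) = c * ssum a"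
  by (simp add: ssum_def sum_distrib_left)

lemma ssum_Mv: "ssum (Mv z) = (real CARD('n) + 1) * ssum (z::real^'n::finite)"
  by (simp add: ssum_def Mv_def sum.distrib algebra_simps)

lemma ssum_Nv: "ssum (Nv z) = ssum (z::real^'n::finite)"
proof -
  have "ssum (Nv z) = (\<Sum>i\<in>UNIV. (real CARD('n) + 1) * z$i) - (\<Sum>i\<in>(UNIV::'n set). ssum z)"
    by (simp add: ssum_def Nv_def sum_subtractf)
  also have "\<dots> = (real CARD('n) + 1) * ssum z - real CARD('n) * ssum z"
    by (simp add: ssum_def sum_distrib_left)
  finally show ?thesis by (simp add: algebra_simps)
qed

lemma Nv_Mv: "Nv (Mv z) = (real CARD('n) + 1) *\<^sub>R (z::real^'n::finite)"
  by (simp add: vec_eq_iff Nv_def ssum_Mv) (simp add: Mv_def algebra_simps)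

lemma Mv_Nv: "Mv (Nv z) = (real CARD('n) + 1) *\<^sub>R (z::real^'n::finite)"
  by (simp add: vec_eq_iff Mv_def ssum_Nv) (simp add: Nv_def algebra_simps)

lemma Nv_diff: "Nv (a - b) = Nv a - Nv (b::real^'n::finite)"
  by (simp add: vec_eq_iff Nv_def ssum_diff algebra_simps)

lemma Mv_scale: "Mv (c *\<^sub>R a) = c *\<^sub>R Mv (a::real^'n::finite)"
  by (simp add: vec_eq_iff Mv_def ssum_scale algebra_simps)

lemma inner_Nv: "a \<bullet> Nv b = Bf a (b::real^'n::finite)"
proof -
  have "a \<bullet> Nv b = (\<Sum>i\<in>UNIV. (real CARD('n) + 1) * (a$i * b$i)) - (\<Sum>i\<in>UNIV. a$i * ssum b)"
    by (simp add: inner_vec_def Nv_def sum_subtractf algebra_simps)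
  also have "\<dots> = Bf a b"
  proof -
    have "ssum a * ssum b = (\<Sum>i\<in>UNIV. a$i * ssum b)"
      unfolding ssum_def[of a] by (rule sum_distrib_right)
    then show ?thesis by (simp add: Bf_def inner_vec_def sum_distrib_left)
  qed
  finally show ?thesis .
qed

lemma Bf_sym: "Bf a b = Bf b a"
  by (simp add: Bf_def inner_commute mult.commute)

lemma Bf_nonneg: "Bf a a \<ge> 0"
proof -
  have "(ssum a)^2 \<le> (\<Sum>i\<in>UNIV. (a$i)^2) * real (card (UNIV::'a set))"
    unfolding ssum_def by (rule sum_squared_le_sum_of_squares)
  moreover have "a \<bullet> a = (\<Sum>i\<in>UNIV. (a$i)^2)"
    by (simp add: inner_vec_def power2_eq_square)
  moreover have "(\<Sum>i\<in>UNIV. (a$i)^2) \<ge> 0" by (simp add: sum_nonneg)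
  ultimately show ?thesis unfolding Bf_def by (simp add: power2_eq_square algebra_simps)
qed



lemma Bf_expand: "Bf (a + t *\<^sub>R b) (a + t *\<^sub>R b) = Bf a a + 2 * t * Bf a b + t^2 * Bf b (b::real^'n::finite)"
  by (simp add: Bf_def ssum_add ssum_scale inner_add_left inner_add_right inner_commute[of b a]
      power2_eq_square algebra_simps)

lemma Bf_CS: "(Bf a b)^2 \<le> Bf a a * Bf b (b::real^'n::finite)"
proof (cases "Bf b b = 0")
  case True
  show ?thesis
  proof (rule ccontr)
    assume "\<not> ?thesis"
    then have nz: "Bf a b \<noteq> 0" using True by simp
    define t where "t = - (Bf a a + 1) / (2 * Bf a b)"
    have "0 \<le> Bf (a + t *\<^sub>R b) (a + t *\<^sub>R b)" by (rule Bf_nonneg)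
    also have "\<dots> = Bf a a + 2 * t * Bf a b" using True by (simp add: Bf_expand)
    also have "\<dots> = -1" using nz by (simp add: t_def field_simps)
    finally show False by simp
  qed
next
  case False
  then have pos: "Bf b b > 0" using Bf_nonneg[of b] by simp
  define t where "t = - Bf a b / Bf b b"
  have "0 \<le> Bf (a + t *\<^sub>R b) (a + t *\<^sub>R b)" by (rule Bf_nonneg)
  also have "\<dots> = Bf a a + 2 * t * Bf a b + t^2 * Bf b b" by (simp add: Bf_expand)
  also have "\<dots> = Bf a a - (Bf a b)^2 / Bf b b" using pos
    by (simp add: t_def field_simps power2_eq_square)
  finally have "(Bf a b)^2 / Bf b b \<le> Bf a a" by simp
  then show ?thesis using pos by (simp add: field_simps)
qed

lemma indep2:
  fixes u v x y :: "real^'n::finite"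
  assumes "(x \<bullet> u) * (y \<bullet> v) - (x \<bullet> v) * (y \<bullet> u) \<noteq> 0"
  shows "independent {u, v}" "u \<noteq> v"
proof -
  show "u \<noteq> v" using assms by auto
  have v0: "v \<noteq> 0" using assms by auto
  have "u \<notin> span {v}"
  proof
    assume "u \<in> span {v}"
    then obtain k where "u = k *\<^sub>R v" by (auto simp: span_singleton)
    then show False using assms by (simp add: algebra_simps)
  qed
  then show "independent {u, v}" using v0 \<open>u \<noteq> v\<close>
    by (simp add: independent_insert)
qed



lemma XY_Mv:
  fixes X Y :: "real^'n::finite^'n"
  assumes XY: "\<And>i j. X$i$j + Y$i$j = (if i = j then 2 else 1)"
  shows "X *v z + Y *v z = Mv z"
proof -
  have "\<And>i. (\<Sum>j\<in>UNIV. X$i$j * z$j) + (\<Sum>j\<in>UNIV. Y$i$j * z$j) = z$i + ssum z"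
  proof -
    fix i
    have "(\<Sum>j\<in>UNIV. X$i$j * z$j) + (\<Sum>j\<in>UNIV. Y$i$j * z$j)
        = (\<Sum>j\<in>UNIV. (X$i$j + Y$i$j) * z$j)" by (simp add: sum.distrib algebra_simps)
    also have "\<dots> = (\<Sum>j\<in>UNIV. z$j + (if i = j then z$j else 0))"
      by (rule sum.cong) (auto simp: XY)
    also have "\<dots> = z$i + ssum z" by (simp add: sum.distrib ssum_def)
    finally show "?thesis i" .
  qed
  then show ?thesis by (simp add: vec_eq_iff matrix_vector_mult_def Mv_def)
qed

lemma sym_inner:
  fixes X :: "real^'n::finite^'n"
  assumes sym: "\<And>i j. X$i$j = X$j$i"
  shows "x \<bullet> (X *v w) = (X *v x) \<bullet> w"
proof -
  have "x \<bullet> (X *v w) = (\<Sum>i\<in>UNIV. \<Sum>j\<in>UNIV. x$i * X$i$j * w$j)"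
    unfolding inner_vec_def matrix_vector_mult_def
    by (simp add: sum_distrib_left mult.assoc)
  also have "\<dots> = (\<Sum>j\<in>UNIV. \<Sum>i\<in>UNIV. x$i * X$i$j * w$j)" by (rule sum.swap)
  also have "\<dots> = (\<Sum>j\<in>UNIV. (\<Sum>i\<in>UNIV. X$j$i * x$i) * w$j)"
    by (rule sum.cong[OF refl], subst sum_distrib_right, rule sum.cong[OF refl], simp add: sym mult_ac)
  also have "\<dots> = (X *v x) \<bullet> w"
    unfolding inner_vec_def matrix_vector_mult_def
    by (simp add: mult.commute)
  finally show ?thesis .
qed

definition pp :: "real^'n::finite^'n \<Rightarrow> real^'n^'n \<Rightarrow> real^'n \<Rightarrow> real^'n" where
  "pp X Y z = X *v Nv (Y *v z)"

lemma pp_swap: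
  fixes X Y :: "real^'n::finite^'n"
  assumes XY: "\<And>i j. X$i$j + Y$i$j = (if i = j then 2 else 1)"
  shows "pp X Y z = Y *v Nv (X *v z)"
proof -
  have Y: "\<And>w. Y *v w = Mv w - X *v w" using XY_Mv[OF XY] by (metis add_diff_cancel_left')
  have "pp X Y z = X *v ((real CARD('n) + 1) *\<^sub>R z - Nv (X *v z))"
    by (simp add: pp_def Y Nv_diff Nv_Mv)
  also have "\<dots> = (real CARD('n) + 1) *\<^sub>R (X *v z) - X *v Nv (X *v z)"
    by (simp add: matrix_vector_mult_diff_distrib matrix_vector_mult_scaleR)
  also have "\<dots> = Y *v Nv (X *v z)" by (simp add: Y Mv_Nv)
  finally show ?thesis .
qed

lemma core_rank:
  fixes X Y :: "real^'n::finite^'n"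
  assumes XY: "\<And>i j. X$i$j + Y$i$j = (if i = j then 2 else 1)"
    and det: "(x \<bullet> pp X Y x) * (y \<bullet> pp X Y y) - (x \<bullet> pp X Y y) * (y \<bullet> pp X Y x) \<noteq> 0"
  shows "rank X + rank Y \<ge> CARD('n) + 2"
proof -
  let ?S = "range (\<lambda>z. X *v z)" and ?T = "range (\<lambda>z. Y *v z)"
  have sS: "subspace ?S" by (rule linear_subspace_image) (auto intro: subspace_UNIV)
  have sT: "subspace ?T" by (rule linear_subspace_image) (auto intro: subspace_UNIV)
  have sum_univ: "{a + b |a b. a \<in> ?S \<and> b \<in> ?T} = UNIV"
  proof -
    have "z \<in> {a + b |a b. a \<in> ?S \<and> b \<in> ?T}" for z
    proof -
      define v where "v = (1 / (real CARD('n) + 1)) *\<^sub>R Nv z"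
      have "X *v v + Y *v v = z"
        by (simp add: XY_Mv[OF XY] v_def Mv_scale Mv_Nv)
      then show ?thesis by blast
    qed
    then show ?thesis by auto
  qed
  have inS: "pp X Y w \<in> ?S \<inter> ?T" for w
  proof -
    have "pp X Y w = X *v Nv (Y *v w)" by (simp add: pp_def)
    moreover have "pp X Y w = Y *v Nv (X *v w)" by (rule pp_swap[OF XY])
    ultimately show ?thesis by (metis IntI rangeI)
  qed
  have ind: "independent {pp X Y x, pp X Y y}" and ne: "pp X Y x \<noteq> pp X Y y"
    using indep2[OF det] by auto
  have "card {pp X Y x, pp X Y y} \<le> dim (?S \<inter> ?T)"
    by (rule independent_card_le_dim) (use inS ind in auto)
  then have d2: "2 \<le> dim (?S \<inter> ?T)" using ne by simp
  have "dim {a + b |a b. a \<in> ?S \<and> b \<in> ?T} + dim (?S \<inter> ?T) = dim ?S + dim ?T"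
    by (rule dim_sums_Int[OF sS sT])
  then have "CARD('n) + dim (?S \<inter> ?T) = rank X + rank Y"
    by (simp add: sum_univ rank_dim_range)
  then show ?thesis using d2 by simp
qed



lemma q_forms:
  fixes X Y :: "real^'n::finite^'n"
  assumes XY: "\<And>i j. X$i$j + Y$i$j = (if i = j then 2 else 1)"
    and symX: "\<And>i j. X$i$j = X$j$i" and symY: "\<And>i j. Y$i$j = Y$j$i"
  shows "x \<bullet> pp X Y x = (real CARD('n) + 1) * ((X *v x) \<bullet> x) - Bf (X *v x) (X *v x)"
    and "y \<bullet> pp X Y y = (real CARD('n) + 1) * ((Y *v y) \<bullet> y) - Bf (Y *v y) (Y *v y)"
    and "x \<bullet> pp X Y y = Bf (X *v x) (Y *v y)"
    and "y \<bullet> pp X Y x = Bf (X *v x) (Y *v y)"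
proof -
  have Y: "\<And>w. Y *v w = Mv w - X *v w" using XY_Mv[OF XY] by (metis add_diff_cancel_left')
  have X: "\<And>w. X *v w = Mv w - Y *v w" using XY_Mv[OF XY] by (metis add_diff_cancel)
  show "x \<bullet> pp X Y x = (real CARD('n) + 1) * ((X *v x) \<bullet> x) - Bf (X *v x) (X *v x)"
    unfolding pp_def sym_inner[OF symX]
    by (simp add: Y Nv_diff Nv_Mv inner_diff_right inner_Nv)
  show "y \<bullet> pp X Y y = (real CARD('n) + 1) * ((Y *v y) \<bullet> y) - Bf (Y *v y) (Y *v y)"
    unfolding pp_swap[OF XY] sym_inner[OF symY]
    by (simp add: X Nv_diff Nv_Mv inner_diff_right inner_Nv)
  show "x \<bullet> pp X Y y = Bf (X *v x) (Y *v y)"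
    unfolding pp_def sym_inner[OF symX] by (simp add: inner_Nv)
  show "y \<bullet> pp X Y x = Bf (X *v x) (Y *v y)"
    unfolding pp_swap[OF XY] sym_inner[OF symY] by (simp add: inner_Nv Bf_sym)
qed

lemma cert_neg_neg:
  fixes X Y :: "real^'n::finite^'n"
  assumes XY: "\<And>i j. X$i$j + Y$i$j = (if i = j then 2 else 1)"
    and symX: "\<And>i j. X$i$j = X$j$i" and symY: "\<And>i j. Y$i$j = Y$j$i"
    and nx: "(X *v x) \<bullet> x < 0" and ny: "(Y *v y) \<bullet> y < 0"
  shows "rank X + rank Y \<ge> CARD('n) + 2"
proof (rule core_rank[OF XY])
  let ?a = "Bf (X *v x) (X *v x)" and ?b = "Bf (Y *v y) (Y *v y)" and ?c = "Bf (X *v x) (Y *v y)"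
  let ?P = "(real CARD('n) + 1) * ((X *v x) \<bullet> x)" and ?R = "(real CARD('n) + 1) * ((Y *v y) \<bullet> y)"
  have a: "?a \<ge> 0" and b: "?b \<ge> 0" by (rule Bf_nonneg)+
  have c: "?c^2 \<le> ?a * ?b" by (rule Bf_CS)
  have P: "?P < 0" using nx by (simp add: mult_pos_neg)
  have R: "?R < 0" using ny by (simp add: mult_pos_neg)
  have "(?P - ?a) * (?R - ?b) - ?c * ?c > 0"
  proof -
    have "(?P - ?a) * (?R - ?b) = ?P * ?R - ?P * ?b - ?a * ?R + ?a * ?b" by (simp add: algebra_simps)
    moreover have "?P * ?R > 0" using P R by (simp add: mult_neg_neg)
    moreover have "?P * ?b \<le> 0" using P b by (simp add: mult_nonpos_nonneg)
    moreover have "?a * ?R \<le> 0" using a R by (simp add: mult_nonneg_nonpos)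
    ultimately show ?thesis using c by (simp add: power2_eq_square)
  qed
  then show "(x \<bullet> pp X Y x) * (y \<bullet> pp X Y y) - (x \<bullet> pp X Y y) * (y \<bullet> pp X Y x) \<noteq> 0"
    using q_forms(1)[OF XY symX symY, where x=x] q_forms(2)[OF XY symX symY, where y=y]
      q_forms(3)[OF XY symX symY, where x=x and y=y] q_forms(4)[OF XY symX symY, where x=x and y=y]
    by simp
qed

lemma cert_pos_neg:
  fixes X Y :: "real^'n::finite^'n"
  assumes XY: "\<And>i j. X$i$j + Y$i$j = (if i = j then 2 else 1)"
    and symX: "\<And>i j. X$i$j = X$j$i" and symY: "\<And>i j. Y$i$j = Y$j$i"
    and px: "x \<bullet> pp X Y x > 0" and ny: "(Y *v y) \<bullet> y < 0"
  shows "rank X + rank Y \<ge> CARD('n) + 2"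
proof (rule core_rank[OF XY])
  let ?b = "Bf (Y *v y) (Y *v y)" and ?c = "Bf (X *v x) (Y *v y)"
  let ?R = "(real CARD('n) + 1) * ((Y *v y) \<bullet> y)"
  have b: "?b \<ge> 0" by (rule Bf_nonneg)
  have R: "?R < 0" using ny by (simp add: mult_pos_neg)
  have "(x \<bullet> pp X Y x) * (?R - ?b) < 0" using px R b by (simp add: mult_pos_neg)
  moreover have "?c * ?c \<ge> 0" by simp
  ultimately have "(x \<bullet> pp X Y x) * (?R - ?b) - ?c * ?c < 0" by linarith
  then show "(x \<bullet> pp X Y x) * (y \<bullet> pp X Y y) - (x \<bullet> pp X Y y) * (y \<bullet> pp X Y x) \<noteq> 0"
    using q_forms(1)[OF XY symX symY, where x=x] q_forms(2)[OF XY symX symY, where y=y]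
      q_forms(3)[OF XY symX symY, where x=x and y=y] q_forms(4)[OF XY symX symY, where x=x and y=y]
    by simp
qed



definition XF :: "('n::finite \<Rightarrow> 'n \<Rightarrow> bool) \<Rightarrow> real^'n^'n" where
  "XF F = adj_matrix F + mat 1"

lemma XF_entry: "simple_graph F \<Longrightarrow> XF F $ i $ j = (if i = j \<or> F i j then 1 else 0)"
  by (auto simp: XF_def adj_matrix_def mat_def simple_graph_def)

lemma simple_compl: "simple_graph F \<Longrightarrow> simple_graph (complement_graph F)"
  by (auto simp: simple_graph_def complement_graph_def)

lemma compl_compl: "simple_graph F \<Longrightarrow> complement_graph (complement_graph F) = F"
  by (auto simp: simple_graph_def complement_graph_def fun_eq_iff)

lemma XF_compl_entry: "simple_graph F \<Longrightarrow> XF (complement_graph F) $ i $ j = (if i = j \<or> \<not> F i j then 1 else 0)"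
  by (auto simp: XF_def adj_matrix_def mat_def simple_graph_def complement_graph_def)

lemma XF_sum: "simple_graph F \<Longrightarrow> XF F $ i $ j + XF (complement_graph F) $ i $ j = (if i = j then 2 else 1)"
  by (simp add: XF_entry XF_compl_entry)

lemma XF_sym: "simple_graph F \<Longrightarrow> XF F $ i $ j = XF F $ j $ i"
  by (auto simp: XF_entry simple_graph_def)

lemma col_entry: "(A *v axis b 1) $ a = A $ a $ (b::'n::finite)" for A :: "real^'n^'m::finite"
  by (simp add: matrix_vector_mult_basis column_def)

lemma ax_form: "(A *v axis b 1) \<bullet> axis a 1 = A $ a $ (b::'n::finite)" for A :: "real^'n^'n"
  by (simp add: inner_axis col_entry)

lemma ax_form': "axis a 1 \<bullet> (A *v axis b 1) = A $ a $ (b::'n::finite)" for A :: "real^'n^'n"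
  by (simp add: inner_commute[of "axis a 1"] ax_form)

lemma P3_form:
  assumes s: "simple_graph F" and "F i j" "F j k" "\<not> F i k" "i \<noteq> k"
  shows "(XF F *v (axis i 1 - axis j 1 + axis k 1)) \<bullet> (axis i 1 - axis j 1 + axis k 1) = -1"
proof -
  have "i \<noteq> j" "j \<noteq> k" using assms by (auto simp: simple_graph_def)
  moreover have "F j i" "F k j" "\<not> F k i" using assms by (auto simp: simple_graph_def)
  ultimately show ?thesis using assms
    by (simp add: matrix_vector_mult_diff_distrib matrix_vector_right_distrib inner_add_left
        inner_diff_left inner_add_right inner_diff_right ax_form XF_entry)
qed

lemma rank_ge_2:
  assumes s: "simple_graph F" and "i \<noteq> j" "\<not> F i j"
  shows "rank (XF F) \<ge> 2"
proof -
  let ?u = "XF F *v axis i 1" and ?v = "XF F *v axis j 1"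
  have det: "(axis i 1 \<bullet> ?u) * (axis j 1 \<bullet> ?v) - (axis i 1 \<bullet> ?v) * (axis j 1 \<bullet> ?u) \<noteq> 0"
    using assms by (simp add: ax_form' XF_entry simple_graph_def)
  have "card {?u, ?v} \<le> dim (range (\<lambda>z. XF F *v z))"
    by (rule independent_card_le_dim) (use indep2(1)[OF det] in auto)
  then show ?thesis using indep2(2)[OF det] by (simp add: rank_dim_range)
qed

lemma rank_ge_3:
  assumes s: "simple_graph F" and ik: "i \<noteq> k" "\<not> F i k"
    and ijk: "(F i j \<and> F j k) \<or> (i \<noteq> j \<and> j \<noteq> k \<and> \<not> F i j \<and> \<not> F j k)"
  shows "rank (XF F) \<ge> 3"
proof -
  let ?ui = "XF F *v axis i 1" and ?uj = "XF F *v axis j 1" and ?uk = "XF F *v axis k 1"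
  have ne: "i \<noteq> j" "j \<noteq> k" using ijk s ik by (auto simp: simple_graph_def)
  have sym: "\<And>a b. F a b = F b a" using s by (auto simp: simple_graph_def)
  have det: "(axis i 1 \<bullet> ?ui) * (axis k 1 \<bullet> ?uk) - (axis i 1 \<bullet> ?uk) * (axis k 1 \<bullet> ?ui) \<noteq> 0"
    using s ik by (simp add: ax_form' XF_entry simple_graph_def)
  have notin: "?uj \<notin> span {?ui, ?uk}"
  proof
    assume "?uj \<in> span {?ui, ?uk}"
    then obtain a where "?uj - a *\<^sub>R ?ui \<in> span {?uk}" by (auto simp: span_insert)
    then obtain b where "?uj - a *\<^sub>R ?ui = b *\<^sub>R ?uk" by (auto simp: span_singleton)
    then have ab: "?uj = a *\<^sub>R ?ui + b *\<^sub>R ?uk" by (simp add: algebra_simps)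
    have c: "XF F $ t $ j = a * XF F $ t $ i + b * XF F $ t $ k" for t
    proof -
      have "?uj $ t = (a *\<^sub>R ?ui + b *\<^sub>R ?uk) $ t" using ab by simp
      then show ?thesis by (simp only: col_entry vector_add_component vector_scaleR_component) simp
    qed
    have "XF F $ i $ i = 1" "XF F $ j $ j = 1" "XF F $ k $ k = 1"
      "XF F $ i $ k = 0" "XF F $ k $ i = 0" using s ik sym[of i k] by (simp_all add: XF_entry)
    moreover have "XF F $ i $ j = XF F $ j $ i" "XF F $ k $ j = XF F $ j $ k"
      using s by (simp_all add: XF_sym)
    moreover have "(XF F $ i $ j = 1 \<and> XF F $ j $ k = 1) \<or> (XF F $ i $ j = 0 \<and> XF F $ j $ k = 0)"
      using ijk s ne by (auto simp: XF_entry)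
    ultimately show False using c[of i] c[of j] c[of k] by auto
  qed
  have ind: "independent {?uj, ?ui, ?uk}"
    using indep2[OF det] notin by (simp add: independent_insert)
  have s1: "?ui \<in> span {?ui, ?uk}" and s2: "?uk \<in> span {?ui, ?uk}" by (simp_all add: span_base)
  have n1: "?uj \<noteq> ?ui" using notin s1 by metis
  have n2: "?uj \<noteq> ?uk" using notin s2 by metis
  have "card {?uj, ?ui, ?uk} \<le> dim (range (\<lambda>z. XF F *v z))"
    by (rule independent_card_le_dim) (use ind in auto)
  moreover have "card {?uj, ?ui, ?uk} = 3" using n1 n2 indep2(2)[OF det] by simp
  ultimately show ?thesis by (simp add: rank_dim_range)
qed

lemma rank_le_2:
  assumes s: "simple_graph F" and S: "\<And>i j. F i j \<longleftrightarrow> i \<noteq> j \<and> (i \<in> S \<longleftrightarrow> j \<in> S)"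
  shows "rank (XF F) \<le> 2"
proof -
  define e1 :: "real^'a" where "e1 = (\<chi> i. if i \<in> S then 1 else 0)"
  define e2 :: "real^'a" where "e2 = (\<chi> i. if i \<in> S then 0 else 1)"
  have X: "XF F $ i $ j = (if (i \<in> S \<longleftrightarrow> j \<in> S) then 1 else 0)" for i j
    using S[of i j] by (auto simp: XF_entry[OF s])
  have "XF F *v z = (\<Sum>j\<in>S. z$j) *\<^sub>R e1 + (\<Sum>j\<in>-S. z$j) *\<^sub>R e2" for z
  proof -
    have "(XF F *v z) $ i = ((\<Sum>j\<in>S. z$j) *\<^sub>R e1 + (\<Sum>j\<in>-S. z$j) *\<^sub>R e2) $ i" for i
    proof -
      have "(XF F *v z) $ i = (\<Sum>j\<in>UNIV. if (i \<in> S \<longleftrightarrow> j \<in> S) then z$j else 0)"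
        unfolding matrix_vector_mult_def by (auto simp: X intro!: sum.cong)
      also have "\<dots> = (\<Sum>j\<in>{j\<in>UNIV. (i \<in> S \<longleftrightarrow> j \<in> S)}. z$j)"
        by (rule sum.inter_filter[symmetric]) simp
      also have "\<dots> = ((\<Sum>j\<in>S. z$j) *\<^sub>R e1 + (\<Sum>j\<in>-S. z$j) *\<^sub>R e2) $ i"
        by (cases "i \<in> S") (auto simp: e1_def e2_def intro!: sum.cong)
      finally show ?thesis .
    qed
    then show ?thesis by (simp add: vec_eq_iff)
  qed
  note form = this
  have b1: "e1 \<in> span {e1, e2}" and b2: "e2 \<in> span {e1, e2}" by (simp_all add: span_base)
  have "range (\<lambda>z. XF F *v z) \<subseteq> span {e1, e2}"
  proof
    fix w assume "w \<in> range (\<lambda>z. XF F *v z)"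
    then obtain z where w: "w = XF F *v z" by auto
    show "w \<in> span {e1, e2}" unfolding w form
      by (intro span_add span_scale b1 b2)
  qed
  then have "dim (range (\<lambda>z. XF F *v z)) \<le> card {e1, e2}" by (rule dim_le_card) simp
  also have "\<dots> \<le> 2" by (simp add: card_insert_le_m1)
  finally show ?thesis by (simp add: rank_dim_range)
qed



definition deg :: "('n::finite \<Rightarrow> 'n \<Rightarrow> bool) \<Rightarrow> 'n \<Rightarrow> nat" where
  "deg F v = card {u. F v u}"

lemma deg_eq:
  assumes s: "simple_graph F" and noP3: "\<And>a b c. F a b \<Longrightarrow> F b c \<Longrightarrow> a \<noteq> c \<Longrightarrow> F a c"
    and e: "F v u"
  shows "deg F u = deg F v"
proof -
  have sym: "\<And>a b. F a b \<Longrightarrow> F b a" and irr: "\<And>a. \<not> F a a" using s by (auto simp: simple_graph_def)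
  have eq: "insert u {w. F u w} = insert v {w. F v w}"
  proof (intro set_eqI iffI)
    fix w assume "w \<in> insert u {w. F u w}"
    then show "w \<in> insert v {w. F v w}" using e sym noP3[of v u w] by auto
  next
    fix w assume "w \<in> insert v {w. F v w}"
    then show "w \<in> insert u {w. F u w}" using e sym noP3[of u v w] sym[OF e] by auto
  qed
  have "card (insert u {w. F u w}) = deg F u + 1" using irr by (simp add: deg_def)
  moreover have "card (insert v {w. F v w}) = deg F v + 1" using irr by (simp add: deg_def)
  ultimately show ?thesis using eq by simp
qed

lemma pos_isolated:
  fixes F :: "'n::finite \<Rightarrow> 'n \<Rightarrow> bool"
  assumes s: "simple_graph F" and iso: "\<And>u. \<not> F v u"
  shows "(real CARD('n) + 1) * ((XF F *v axis v 1) \<bullet> axis v 1) - Bf (XF F *v axis v 1) (XF F *v axis v 1) > 0"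
proof -
  have X: "XF F *v axis v 1 = axis v 1"
    unfolding vec_eq_iff col_entry using iso s by (auto simp: XF_entry axis_def simple_graph_def)
  have ss: "ssum (axis v 1 :: real^'n) = 1" by (simp add: ssum_def axis_def)
  show ?thesis by (simp add: X Bf_def ss inner_axis_axis)
qed

lemma pos_noiso:
  fixes F :: "'n::finite \<Rightarrow> 'n \<Rightarrow> bool"
  assumes s: "simple_graph F" and noP3: "\<And>a b c. F a b \<Longrightarrow> F b c \<Longrightarrow> a \<noteq> c \<Longrightarrow> F a c"
    and noiso: "\<And>v. \<exists>u. F v u"
  defines "x \<equiv> (\<chi> v. 1 / real (deg F v)) :: real^'n"
  shows "(real CARD('n) + 1) * ((XF F *v x) \<bullet> x) - Bf (XF F *v x) (XF F *v x) > 0"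
proof -
  have dpos: "deg F v > 0" for v
  proof -
    obtain u where "F v u" using noiso by blast
    then show ?thesis by (auto simp: deg_def card_gt_0_iff)
  qed
  have irr: "\<And>a. \<not> F a a" using s by (auto simp: simple_graph_def)
  have Xx: "XF F *v x = (\<chi> v. 1 + x$v)"
  proof -
    have "(XF F *v x) $ v = 1 + x $ v" for v
    proof -
      have "(XF F *v x) $ v = (\<Sum>u\<in>UNIV. if u \<in> insert v {u. F v u} then x$u else 0)"
        unfolding matrix_vector_mult_def by (auto simp: XF_entry[OF s] intro!: sum.cong)
      also have "\<dots> = (\<Sum>u\<in>insert v {u. F v u}. x$u)"
      proof -
        have setq: "{u\<in>UNIV. u \<in> insert v {u. F v u}} = insert v {u. F v u}" by blast
        show ?thesis
          using sum.inter_filter[of UNIV "\<lambda>u. x$u" "\<lambda>u. u \<in> insert v {u. F v u}"] setq by simp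
      qed
      also have "\<dots> = x$v + (\<Sum>u\<in>{u. F v u}. x$u)" using irr by simp
      also have "(\<Sum>u\<in>{u. F v u}. x$u) = (\<Sum>u\<in>{u. F v u}. 1 / real (deg F v))"
        by (rule sum.cong) (auto simp: x_def deg_eq[OF s noP3])
      also have "\<dots> = 1" using dpos[of v] noiso[of v] by (simp add: deg_def)
      finally show ?thesis by simp
    qed
    then show ?thesis by (simp add: vec_eq_iff)
  qed
  define S where "S = (\<Sum>v\<in>UNIV. 1 + x$v)"
  have inner1: "(XF F *v x) \<bullet> x = (\<Sum>v\<in>UNIV. (1 + x$v) * x$v)"
    by (simp add: Xx inner_vec_def)
  have inner2: "(XF F *v x) \<bullet> (XF F *v x) = (\<Sum>v\<in>UNIV. (1 + x$v) * (1 + x$v))"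
    by (simp add: Xx inner_vec_def)
  have ssX: "ssum (XF F *v x) = S" by (simp add: Xx ssum_def S_def)
  have diff: "(\<Sum>v\<in>UNIV. (1 + x$v) * x$v) - (\<Sum>v\<in>UNIV. (1 + x$v) * (1 + x$v)) = - S"
    by (simp add: S_def sum_subtractf[symmetric] sum_negf[symmetric] algebra_simps)
  have val: "(real CARD('n) + 1) * ((XF F *v x) \<bullet> x) - Bf (XF F *v x) (XF F *v x) = S * S - (real CARD('n) + 1) * S"
  proof -
    have "(real CARD('n) + 1) * ((XF F *v x) \<bullet> x) - Bf (XF F *v x) (XF F *v x)
        = (real CARD('n) + 1) * ((\<Sum>v\<in>UNIV. (1 + x$v) * x$v) - (\<Sum>v\<in>UNIV. (1 + x$v) * (1 + x$v))) + S * S"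
      by (simp add: Bf_def inner1 inner2 ssX algebra_simps)
    also have "\<dots> = (real CARD('n) + 1) * (- S) + S * S" by (simp only: diff)
    finally show ?thesis by (simp add: algebra_simps)
  qed
  obtain v0 :: 'n where True by simp
  have xnn: "x$v \<ge> 0" for v by (simp add: x_def)
  have "(\<Sum>v\<in>insert v0 {u. F v0 u}. x$v) \<le> (\<Sum>v\<in>UNIV. x$v)"
    by (rule sum_mono2) (auto simp: xnn)
  moreover have "(\<Sum>v\<in>insert v0 {u. F v0 u}. x$v) = x$v0 + (\<Sum>u\<in>{u. F v0 u}. 1 / real (deg F v0))"
    using irr by (auto simp: x_def deg_eq[OF s noP3] intro!: sum.cong)
  moreover have "(\<Sum>u\<in>{u. F v0 u}. 1 / real (deg F v0)) = 1" using dpos[of v0] noiso[of v0] by (simp add: deg_def)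
  moreover have "x$v0 > 0" using dpos[of v0] by (simp add: x_def)
  ultimately have sx: "(\<Sum>v\<in>UNIV. x$v) > 1" by linarith
  have "S = real CARD('n) + (\<Sum>v\<in>UNIV. x$v)" by (simp add: S_def sum.distrib)
  then have "S > real CARD('n) + 1" using sx by simp
  then have "S * S - (real CARD('n) + 1) * S > 0"
    by (smt (verit) mult_strict_right_mono of_nat_0_le_iff)
  then show ?thesis using val by simp
qed



lemma caseB:
  fixes F :: "'n::finite \<Rightarrow> 'n \<Rightarrow> bool"
  assumes s: "simple_graph F" and noP3: "\<And>a b c. F a b \<Longrightarrow> F b c \<Longrightarrow> a \<noteq> c \<Longrightarrow> F a c"
    and edge: "F i i'" and nc: "a0 \<noteq> b0" "\<not> F a0 b0"
  shows "rank (XF F) + rank (XF (complement_graph F)) \<ge> CARD('n) + 2"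
proof -
  have sym: "\<And>a b. F a b \<Longrightarrow> F b a" and irr: "\<And>a. \<not> F a a" using s by (auto simp: simple_graph_def)
  obtain y0 where y0: "y0 \<noteq> i" "\<not> F i y0"
  proof -
    consider "a0 \<noteq> i \<and> \<not> F i a0" | "a0 = i" | "a0 \<noteq> i \<and> F i a0" by blast
    then show ?thesis
    proof cases
      case 1 show ?thesis by (rule that[of a0]) (use 1 in auto)
    next
      case 2 show ?thesis by (rule that[of b0]) (use 2 nc in auto)
    next
      case 3
      have "b0 \<noteq> i" using 3 nc sym by blast
      moreover have "\<not> F i b0" using 3 nc sym noP3[of a0 i b0] by blast
      ultimately show ?thesis by (rule that)
    qed
  qed
  have ii': "i \<noteq> i'" using edge irr by blast
  have y1: "y0 \<noteq> i'" using edge y0 by blast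
  have y2: "\<not> F i' y0" using noP3[of i i' y0] edge y0 by blast
  let ?G = "complement_graph F"
  let ?y = "axis i 1 - axis y0 1 + axis i' 1 :: real^'n"
  have "?G i y0" "?G y0 i'" "\<not> ?G i i'"
    using y0 y1 y2 edge sym by (auto simp: complement_graph_def)
  then have ny: "(XF ?G *v ?y) \<bullet> ?y = -1" using ii' by (intro P3_form[OF simple_compl[OF s]])
  have XY: "\<And>i j. XF F $ i $ j + XF ?G $ i $ j = (if i = j then 2 else 1)" by (rule XF_sum[OF s])
  have symX: "\<And>i j. XF F $ i $ j = XF F $ j $ i" by (rule XF_sym[OF s])
  have symY: "\<And>i j. XF ?G $ i $ j = XF ?G $ j $ i" by (rule XF_sym[OF simple_compl[OF s]])
  show ?thesis
  proof (cases "\<exists>v. \<forall>u. \<not> F v u")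
    case True
    then obtain v where v: "\<And>u. \<not> F v u" by blast
    show ?thesis
      by (rule cert_pos_neg[OF XY symX symY _ , where x = "axis v 1" and y = ?y])
        (use pos_isolated[OF s v] q_forms(1)[OF XY symX symY, where x="axis v 1"] ny in auto)
  next
    case False
    then have noiso: "\<And>v. \<exists>u. F v u" by blast
    define x where "x \<equiv> (\<chi> v. 1 / real (deg F v)) :: real^'n"
    show ?thesis
      by (rule cert_pos_neg[OF XY symX symY _ , where x = x and y = ?y])
        (use pos_noiso[OF s noP3 noiso] q_forms(1)[OF XY symX symY, where x=x] ny in \<open>auto simp: x_def\<close>)
  qed
qed

lemma graph_core:
  fixes F :: "'n::finite \<Rightarrow> 'n \<Rightarrow> bool"
  assumes s: "simple_graph F" and nc: "\<not> is_complete F" and ne: "\<not> is_edgeless F"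
  shows "rank (XF F) + rank (XF (complement_graph F)) \<ge> CARD('n) + 2"
proof -
  have sym: "\<And>a b. F a b \<Longrightarrow> F b a" and irr: "\<And>a. \<not> F a a" using s by (auto simp: simple_graph_def)
  obtain a0 b0 where ab: "a0 \<noteq> b0" "\<not> F a0 b0" using nc by (auto simp: is_complete_def)
  obtain i i' where e: "F i i'" using ne by (auto simp: is_edgeless_def)
  have ii': "i \<noteq> i'" using e irr by blast
  let ?G = "complement_graph F"
  have sG: "simple_graph ?G" by (rule simple_compl[OF s])
  show ?thesis
  proof (cases "\<forall>a b c. F a b \<and> F b c \<and> a \<noteq> c \<longrightarrow> F a c")
    case True
    then show ?thesis using caseB[OF s _ e ab] by blast
  next
    case F1: False
    show ?thesis
    proof (cases "\<forall>a b c. ?G a b \<and> ?G b c \<and> a \<noteq> c \<longrightarrow> ?G a c")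
      case True
      have "?G a0 b0" using ab by (simp add: complement_graph_def)
      moreover have "\<not> ?G i i'" using e by (simp add: complement_graph_def)
      ultimately have "rank (XF ?G) + rank (XF (complement_graph ?G)) \<ge> CARD('n) + 2"
        using caseB[OF sG, of a0 b0 i i'] True ii' by blast
      then show ?thesis by (simp add: compl_compl[OF s])
    next
      case F2: False
      obtain a b c where P: "F a b" "F b c" "a \<noteq> c" "\<not> F a c" using F1 by blast
      obtain a' b' c' where Q: "?G a' b'" "?G b' c'" "a' \<noteq> c'" "\<not> ?G a' c'" using F2 by blast
      have XY: "\<And>i j. XF F $ i $ j + XF ?G $ i $ j = (if i = j then 2 else 1)" by (rule XF_sum[OF s])
      have symX: "\<And>i j. XF F $ i $ j = XF F $ j $ i" by (rule XF_sym[OF s])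
      have symY: "\<And>i j. XF ?G $ i $ j = XF ?G $ j $ i" by (rule XF_sym[OF sG])
      show ?thesis
        by (rule cert_neg_neg[OF XY symX symY, where x = "axis a 1 - axis b 1 + axis c 1"
              and y = "axis a' 1 - axis b' 1 + axis c' 1"])
          (use P3_form[OF s P(1,2,4,3)] P3_form[OF sG Q(1,2,4,3)] in auto)
    qed
  qed
qed

lemma two_cliques:
  fixes F :: "'n::finite \<Rightarrow> 'n \<Rightarrow> bool"
  assumes s: "simple_graph F" and r: "rank (XF F) \<le> 2" and ab: "a0 \<noteq> b0" "\<not> F a0 b0"
  shows "\<exists>S. (\<forall>u v. F u v \<longleftrightarrow> u \<noteq> v \<and> (u \<in> S \<longleftrightarrow> v \<in> S)) \<and> a0 \<in> S \<and> b0 \<notin> S"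
proof -
  have sym: "\<And>a b. F a b \<Longrightarrow> F b a" and irr: "\<And>a. \<not> F a a" using s by (auto simp: simple_graph_def)
  have tr: "F a c" if "F a b" "F b c" "a \<noteq> c" for a b c
  proof (rule ccontr)
    assume "\<not> F a c"
    then have "rank (XF F) \<ge> 3" using rank_ge_3[OF s that(3), of b] that by blast
    then show False using r by simp
  qed
  have cover: "k = a0 \<or> F a0 k \<or> k = b0 \<or> F b0 k" for k
  proof (rule ccontr)
    assume "\<not> ?thesis"
    then have "rank (XF F) \<ge> 3" using rank_ge_3[OF s ab, of k] sym by blast
    then show False using r by simp
  qed
  define S where "S = {u. u = a0 \<or> F a0 u}"
  have "F u v \<longleftrightarrow> u \<noteq> v \<and> (u \<in> S \<longleftrightarrow> v \<in> S)" for u v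
  proof
    assume uv: "F u v"
    have "u \<noteq> v" using uv irr by blast
    moreover have "u \<in> S \<longleftrightarrow> v \<in> S"
      unfolding S_def using uv tr[of a0 u v] tr[of a0 v u] sym irr by blast
    ultimately show "u \<noteq> v \<and> (u \<in> S \<longleftrightarrow> v \<in> S)" by blast
  next
    assume h: "u \<noteq> v \<and> (u \<in> S \<longleftrightarrow> v \<in> S)"
    show "F u v"
    proof (cases "u \<in> S")
      case True
      then have "v \<in> S" using h by blast
      then show ?thesis using True h tr[of u a0 v] sym unfolding S_def by blast
    next
      case False
      then have "v \<notin> S" using h by blast
      then have "v = b0 \<or> F b0 v" "u = b0 \<or> F b0 u" using False cover unfolding S_def by blast+
      then show ?thesis using h tr[of u b0 v] sym by blast
    qed
  qed
  moreover have "a0 \<in> S" "b0 \<notin> S" using ab by (auto simp: S_def)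
  ultimately show ?thesis by blast
qed



lemma choose_a:
  fixes S :: "'n::finite set"
  assumes "a0 \<in> S" "b0 \<notin> S"
  shows "\<exists>T. (T = S \<or> T = - S) \<and> 1 \<le> card T \<and> card T \<le> CARD('n) div 2"
proof -
  have c1: "card S \<ge> 1" using assms by (metis One_nat_def Suc_leI card_gt_0_iff empty_iff finite)
  have c2: "card (- S) \<ge> 1" using assms by (metis One_nat_def Suc_leI card_gt_0_iff empty_iff finite ComplI)
  have cs: "card S + card (- S) = CARD('n)"
    by (metis card_Un_disjoint finite Compl_disjoint boolean_algebra_class.sup_compl_top)
  show ?thesis
  proof (cases "card S \<le> CARD('n) div 2")
    case True then show ?thesis using c1 by blast
  next
    case False
    then have "card (- S) \<le> CARD('n) div 2" using cs by linarith
    then show ?thesis using c2 by blast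
  qed
qed

lemma icb_compl:
  assumes "\<forall>u v. G u v \<longleftrightarrow> ((u \<in> S) \<noteq> (v \<in> S))"
  shows "\<forall>u v. G u v \<longleftrightarrow> ((u \<in> - S) \<noteq> (v \<in> - S))"
  using assms by auto

theorem theorem4p2:
  fixes E :: "'n::finite \<Rightarrow> 'n \<Rightarrow> bool"
  assumes "simple_graph E"
    and "\<not> is_complete E"
    and "\<not> is_edgeless E"
  shows "rank (adj_matrix E + mat 1) * rank (adj_matrix (complement_graph E) + mat 1)
           \<ge> 2 * CARD('n) \<and>
         (rank (adj_matrix E + mat 1) * rank (adj_matrix (complement_graph E) + mat 1)
           = 2 * CARD('n) \<longleftrightarrow>
         (\<exists>a::nat. 1 \<le> a \<and> a \<le> CARD('n) div 2 \<and>
            (iso_complete_bipartite E a \<or> iso_complete_bipartite (complement_graph E) a)))"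
proof -
  note s = assms(1)
  have sG: "simple_graph (complement_graph E)" by (rule simple_compl[OF s])
  have irr: "\<And>a. \<not> E a a" using s by (auto simp: simple_graph_def)
  define r where "r = rank (XF E)"
  define t where "t = rank (XF (complement_graph E))"
  define n where "n = CARD('n)"
  have core: "r + t \<ge> n + 2" unfolding r_def t_def n_def by (rule graph_core[OF assms])
  obtain a0 b0 where ab: "a0 \<noteq> b0" "\<not> E a0 b0" using assms(2) by (auto simp: is_complete_def)
  obtain i i' where e: "E i i'" using assms(3) by (auto simp: is_edgeless_def)
  have ii': "i \<noteq> i'" using e irr by blast
  have nGii: "\<not> complement_graph E i i'" using e by (simp add: complement_graph_def)
  have r2: "r \<ge> 2" unfolding r_def by (rule rank_ge_2[OF s ab])
  have t2: "t \<ge> 2" unfolding t_def by (rule rank_ge_2[OF sG ii' nGii])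
  have rn: "r \<le> n" unfolding r_def n_def using rank_bound[of "XF E"] by simp
  have tn: "t \<le> n" unfolding t_def n_def using rank_bound[of "XF (complement_graph E)"] by simp
  have part1: "r * t \<ge> 2 * n"
  proof -
    have "(int r - 2) * (int t - 2) \<ge> 0" using r2 t2 by simp
    then have "int r * int t \<ge> 2 * int n" using core by (simp add: algebra_simps)
    then show ?thesis by (simp flip: of_nat_mult)
  qed
  have part2: "r * t = 2 * n \<longleftrightarrow>
      (\<exists>a::nat. 1 \<le> a \<and> a \<le> n div 2 \<and>
         (iso_complete_bipartite E a \<or> iso_complete_bipartite (complement_graph E) a))"
  proof
    assume eq: "r * t = 2 * n"
    have "(int r - 2) * (int t - 2) = 0"
    proof -
      have "(int r - 2) * (int t - 2) \<ge> 0" using r2 t2 by simp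
      moreover have "int r * int t = 2 * int n" using eq by (simp flip: of_nat_mult)
      ultimately show ?thesis using core by (simp add: algebra_simps)
    qed
    then have "r = 2 \<or> t = 2" by simp
    then show "\<exists>a::nat. 1 \<le> a \<and> a \<le> n div 2 \<and>
         (iso_complete_bipartite E a \<or> iso_complete_bipartite (complement_graph E) a)"
    proof
      assume "r = 2"
      then obtain S where S: "\<forall>u v. E u v \<longleftrightarrow> u \<noteq> v \<and> (u \<in> S \<longleftrightarrow> v \<in> S)" "a0 \<in> S" "b0 \<notin> S"
        using two_cliques[OF s _ ab] r_def by auto
      have G: "\<forall>u v. complement_graph E u v \<longleftrightarrow> ((u \<in> S) \<noteq> (v \<in> S))"
        using S(1) by (auto simp: complement_graph_def)
      obtain T where T: "T = S \<or> T = - S" "1 \<le> card T" "card T \<le> n div 2"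
        using choose_a[OF S(2,3)] n_def by auto
      have "\<forall>u v. complement_graph E u v \<longleftrightarrow> ((u \<in> T) \<noteq> (v \<in> T))"
        using T(1) G icb_compl[OF G] by auto
      then have "iso_complete_bipartite (complement_graph E) (card T)"
        by (auto simp: iso_complete_bipartite_def)
      then show ?thesis using T by blast
    next
      assume "t = 2"
      then obtain S where S: "\<forall>u v. complement_graph E u v \<longleftrightarrow> u \<noteq> v \<and> (u \<in> S \<longleftrightarrow> v \<in> S)"
          "i \<in> S" "i' \<notin> S"
        using two_cliques[OF sG _ ii' nGii] t_def by auto
      have G: "\<forall>u v. E u v \<longleftrightarrow> ((u \<in> S) \<noteq> (v \<in> S))"
        using S(1) irr by (auto simp: complement_graph_def)
      obtain T where T: "T = S \<or> T = - S" "1 \<le> card T" "card T \<le> n div 2"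
        using choose_a[OF S(2,3)] n_def by auto
      have "\<forall>u v. E u v \<longleftrightarrow> ((u \<in> T) \<noteq> (v \<in> T))"
        using T(1) G icb_compl[OF G] by auto
      then have "iso_complete_bipartite E (card T)"
        by (auto simp: iso_complete_bipartite_def)
      then show ?thesis using T by blast
    qed
  next
    assume "\<exists>a::nat. 1 \<le> a \<and> a \<le> n div 2 \<and>
         (iso_complete_bipartite E a \<or> iso_complete_bipartite (complement_graph E) a)"
    then obtain a where "iso_complete_bipartite E a \<or> iso_complete_bipartite (complement_graph E) a"
      by blast
    then show "r * t = 2 * n"
    proof
      assume "iso_complete_bipartite E a"
      then obtain S where S: "\<forall>u v. E u v \<longleftrightarrow> ((u \<in> S) \<noteq> (v \<in> S))"
        by (auto simp: iso_complete_bipartite_def)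
      have "\<And>u v. complement_graph E u v \<longleftrightarrow> u \<noteq> v \<and> (u \<in> S \<longleftrightarrow> v \<in> S)"
        using S by (auto simp: complement_graph_def)
      then have "t \<le> 2" unfolding t_def by (rule rank_le_2[OF sG])
      then have "t = 2" using t2 by simp
      then have "r = n" using core rn by simp
      then show ?thesis using \<open>t = 2\<close> by simp
    next
      assume "iso_complete_bipartite (complement_graph E) a"
      then obtain S where S: "\<forall>u v. complement_graph E u v \<longleftrightarrow> ((u \<in> S) \<noteq> (v \<in> S))"
        by (auto simp: iso_complete_bipartite_def)
      have "\<And>u v. E u v \<longleftrightarrow> u \<noteq> v \<and> (u \<in> S \<longleftrightarrow> v \<in> S)"
        using S irr by (auto simp: complement_graph_def)
      then have "r \<le> 2" unfolding r_def by (rule rank_le_2[OF s])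
      then have "r = 2" using r2 by simp
      then have "t = n" using core tn by simp
      then show ?thesis using \<open>r = 2\<close> by simp
    qed
  qed
  show ?thesis
    using part1 part2 unfolding r_def t_def n_def XF_def by simp
qed


end
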